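(* Let $N\ge 5$ be odd. Let $G_{N,2}$ be the graph with vertex set $\mathbb Z_N$ in which two distinct vertices $x,y$ are adjacent iff $y-x\not\equiv\pm2\pmod N$, and $G_{N,1}$ the graph with vertex set $\mathbb Z_N$ in which distinct $x,y$ are adjacent iff $y-x\not\equiv\pm1\pmod N$. Put $\Delta=\sqrt{N(N-4)}$, $\rho=\frac{N-2+\Delta}{2}$. For $u,v\in\mathbb Z_N$ let $q\equiv v-u\pmod N$, let $s\equiv 2^{-1}\pmod N$, and define $\delta_2(q)=\min\{sq\bmod N,\;N-(sq\bmod N)\}$. Then the effective resistance $R^{(2)}(u,v)$ between $u$ and $v$ in $G_{N,2}$ equals the effective resistance in $G_{N,1}$ between two vertices at circulant distance $\delta_2(q)$ (e.g. $0$ and $\delta_2(q)$), and explicitly \[ R^{(2)}(u,v)=\frac{2}{\Delta(\rho^N+1)}\left\{\rho^N-1+(-1)^{\delta_2(q)}\left(\rho^{\delta_2(q)}-\rho^{N-\delta_2(q)}\right)\right\}. \]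
   Context: Effective resistance is computed with unit conductance on every edge. *)

theory Defs
  imports "HOL-Number_Theory.Cong" Complex_Main
begin

text \<open>Vertex set Z_N is represented by {0..<N} (natural numbers), arithmetic mod N.\<close>

definition circ_adj :: "nat \<Rightarrow> nat \<Rightarrow> nat \<Rightarrow> nat \<Rightarrow> bool" where
  "circ_adj N d x y \<longleftrightarrow> x < N \<and> y < N \<and> x \<noteq> y \<and>
     \<not> [int y - int x = int d] (mod int N) \<and> \<not> [int y - int x = - int d] (mod int N)"

definition laplacian :: "nat \<Rightarrow> (nat \<Rightarrow> nat \<Rightarrow> bool) \<Rightarrow> (nat \<Rightarrow> real) \<Rightarrow> nat \<Rightarrow> real" where
  "laplacian N adj phi x = (\<Sum>y\<in>{y. y < N \<and> adj x y}. phi x - phi y)"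

text \<open>Effective resistance: potential difference phi u - phi v for a potential phi
  on the vertex set with unit current injected at u and extracted at v,
  i.e. L phi = 1_u - 1_v.\<close>
definition eff_res :: "nat \<Rightarrow> (nat \<Rightarrow> nat \<Rightarrow> bool) \<Rightarrow> nat \<Rightarrow> nat \<Rightarrow> real" where
  "eff_res N adj u v = (THE r. \<exists>phi. (\<forall>x<N. laplacian N adj phi x =
        (if x = u then 1 else 0) - (if x = v then 1 else 0)) \<and> r = phi u - phi v)"

end

theory Submission
  imports Defs
begin

definition Dl :: "nat \<Rightarrow> real" where "Dl N = sqrt (real (N * (N - 4)))"
definition rh :: "nat \<Rightarrow> real" where "rh N = (real N - 2 + Dl N) / 2"
definition cc :: "nat \<Rightarrow> real" where "cc N = - 1 / (Dl N * (rh N ^ N + 1))"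
definition g0 :: "nat \<Rightarrow> nat \<Rightarrow> real" where
  "g0 N k = cc N * (-1) ^ k * (rh N ^ k - rh N ^ (N - k))"

lemma rho_facts:
  assumes "N \<ge> 5"
  shows "Dl N > 0" "rh N > 1" "real N - 2 = rh N + 1 / rh N" "Dl N = rh N - 1 / rh N"
proof -
  have sq: "Dl N ^ 2 = real N * (real N - 4)" and pos: "Dl N > 0"
    using assms by (auto simp: Dl_def of_nat_diff)
  show "Dl N > 0" by (rule pos)
  show r1: "rh N > 1" using assms pos unfolding rh_def by simp
  have h1: "(real N - 2 + Dl N) * (real N - 2 + Dl N) = 2 * (real N - 2) * (real N - 2 + Dl N) - 4"
    using sq unfolding power2_eq_square by algebra
  have h2: "(real N - 2) * (real N - 2 + Dl N) - 4 = Dl N * (real N - 2 + Dl N)"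
    using sq unfolding power2_eq_square by algebra
  have e: "rh N * rh N = (real N - 2) * rh N - 1"
    unfolding rh_def using h1 by (simp add: field_simps)
  have e2: "(real N - 2) * rh N - 2 = Dl N * rh N"
    unfolding rh_def using h2 by (simp add: field_simps)
  show "real N - 2 = rh N + 1 / rh N" using e r1 by (simp add: field_simps)
  show "Dl N = rh N - 1 / rh N" using e e2 r1 by (simp add: field_simps)
qed

lemma g0_rec:
  assumes "N \<ge> 5" "odd N" "k < N"
  shows "(real N - 2) * g0 N k + g0 N ((k + 1) mod N) + g0 N ((k + N - 1) mod N)
         = (if k = 0 then 1 else 0)"
proof -
  note rf = rho_facts[OF assms(1)]
  define r where "r = rh N"
  have r1: "r > 1" using rf r_def by simp
  have N2: "real N - 2 = r + 1/r" using rf r_def by simp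
  have D: "Dl N = r - 1/r" using rf r_def by simp
  have ccd: "cc N = - 1 / ((r - 1/r) * (r ^ N + 1))" using D r_def cc_def by simp
  have rpos: "r ^ N + 1 > 0" using r1 by (simp add: add_pos_nonneg)
  have Dpos: "r - 1/r > 0" using rf D by simp
  consider "k = 0" | "k = N - 1" | "0 < k" "k < N - 1" using assms by linarith
  then show ?thesis
  proof cases
    case 1
    obtain n where n: "N = Suc n" "even n" using assms by (cases N) auto
    have m1: "(k + 1) mod N = 1" "(k + N - 1) mod N = n" using 1 n assms by auto
    have "(real N - 2) * g0 N k + g0 N ((k + 1) mod N) + g0 N ((k + N - 1) mod N)
      = cc N * ((r + 1/r) * (1 - r * r^n) - (r - r^n) + (r^n - r))"
      unfolding m1 g0_def using 1 n N2 by (simp add: r_def algebra_simps)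
    also have "\<dots> = cc N * (- ((r - 1/r) * (r ^ N + 1)))"
      using r1 n by (simp add: field_simps)
    also have "\<dots> = 1" unfolding ccd using rpos Dpos by simp
    finally show ?thesis using 1 by simp
  next
    case 2
    obtain n where n: "N = Suc (Suc n)" "odd n" using assms by (cases N; cases "N - 1") auto
    have kN: "k + N - 1 = n + N" using 2 n by simp
    have m3: "(n + N) mod N = n mod N" by (rule mod_add_self2)
    have m2: "(k + N - 1) mod N = n" unfolding kN m3 using n by simp
    have m1: "(k + 1) mod N = 0" "(k + N - 1) mod N = n" "k = Suc n" 
      using 2 n assms m2 by auto
    have "(real N - 2) * g0 N k + g0 N ((k + 1) mod N) + g0 N ((k + N - 1) mod N)
      = cc N * ((r + 1/r) * (r * r^n - r) + (1 - r * r * r^n) - (r^n - r * r))"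
    proof -
      have f: "N - Suc n = 1" "N - n = 2" "N - 0 = N" "r ^ N = r * r * r ^ n" "(-1::real) ^ Suc n = 1"
        "(-1::real) ^ n = -1" using n by auto
      show ?thesis unfolding m1(1,2) g0_def unfolding m1(3) f r_def[symmetric] N2
        by (simp add: f algebra_simps power2_eq_square)
    qed
    also have "\<dots> = 0" using r1 by (simp add: field_simps)
    finally show ?thesis using 2 assms by simp
  next
    case 3
    obtain i where i: "k = Suc i" using 3 by (cases k) auto
    obtain j where j: "N - k = Suc (Suc j)" using 3 by (metis Suc_diff_Suc diff_Suc_1 less_diff_conv add.commute zero_less_diff Nat.lessE)
    have m1: "(k + 1) mod N = Suc k" "(k + N - 1) mod N = i" using 3 i by auto
    have e1: "N - Suc k = Suc j" "N - i = Suc (Suc (Suc j))" using j i by auto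
    have f: "N - k = Suc (Suc j)" "N - Suc k = Suc j" "N - i = Suc (Suc (Suc j))"
      "(-1::real) ^ Suc k = - ((-1) ^ k)" "(-1::real) ^ i = - ((-1) ^ k)"
      "rh N ^ k = r * r ^ i" "rh N ^ Suc k = r * r * r ^ i" "rh N ^ Suc j = r * r ^ j"
      "rh N ^ Suc (Suc j) = r * r * r ^ j" "rh N ^ Suc (Suc (Suc j)) = r * r * r * r ^ j"
      "rh N ^ i = r ^ i"
      using i j e1 by (auto simp: r_def)
    have "(real N - 2) * g0 N k + g0 N ((k + 1) mod N) + g0 N ((k + N - 1) mod N)
      = cc N * (-1)^k * ((r + 1/r) * (r * r^i - r * r * r^j) - (r * r * r^i - r * r^j)
           - (r^i - r * r * r * r^j))"
      unfolding m1 g0_def f unfolding N2 by (simp add: algebra_simps)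
    also have "\<dots> = 0" using r1 by (simp add: field_simps)
    finally show ?thesis using 3 by simp
  qed
qed


definition GG :: "nat \<Rightarrow> int \<Rightarrow> real" where "GG N z = g0 N (nat (z mod int N))"

lemma GG_cong: "a mod int N = b mod int N \<Longrightarrow> GG N a = GG N b"
  unfolding GG_def by simp

lemma GG_nat: "k < N \<Longrightarrow> GG N (int k) = g0 N k"
  unfolding GG_def by simp

lemma GG_rec:
  assumes "N \<ge> 5" "odd N"
  shows "(real N - 2) * GG N z + GG N (z + 1) + GG N (z - 1) = (if z mod int N = 0 then 1 else 0)"
proof -
  define k where "k = nat (z mod int N)"
  have zk: "z mod int N = int k" and kN: "k < N" using assms unfolding k_def
    by (auto simp: nat_less_iff)
  have a: "(z + 1) mod int N = int ((k + 1) mod N)"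
    by (metis zk mod_add_left_eq of_nat_1 of_nat_add of_nat_mod)
  have "(z - 1) mod int N = (int k - 1) mod int N" by (metis zk mod_diff_left_eq)
  also have "\<dots> = (int (k + N - 1) + (-1) * int N) mod int N" using assms by (simp add: of_nat_diff)
  also have "\<dots> = int (k + N - 1) mod int N" by (rule mod_mult_self1)
  also have "\<dots> = int ((k + N - 1) mod N)" by (simp add: of_nat_mod)
  finally have b: "(z - 1) mod int N = int ((k + N - 1) mod N)" .
  have "GG N z = g0 N k" "GG N (z + 1) = g0 N ((k + 1) mod N)" "GG N (z - 1) = g0 N ((k + N - 1) mod N)"
    unfolding GG_def zk a b by simp_all
  then show ?thesis using g0_rec[OF assms kN] zk by simp
qed

lemma GG_neg:
  assumes "N \<ge> 5" "odd N"
  shows "GG N (- z) = GG N z"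
proof -
  define k where "k = nat (z mod int N)"
  have zk: "z mod int N = int k" and kN: "k < N" using assms unfolding k_def
    by (auto simp: nat_less_iff)
  show ?thesis
  proof (cases "k = 0")
    case True
    then have "(- z) mod int N = z mod int N" using zk by (simp add: zmod_zminus1_eq_if)
    then show ?thesis by (rule GG_cong)
  next
    case False
    have "(- z) mod int N = int (N - k)" using zk False kN by (simp add: zmod_zminus1_eq_if of_nat_diff)
    then have "GG N (- z) = g0 N (N - k)" unfolding GG_def by simp
    also have "\<dots> = g0 N k"
    proof -
      have "(-1::real) ^ (N - k) = - ((-1) ^ k)"
      proof -
        have "(-1::real) ^ (N - k) * (-1) ^ k = (-1) ^ N" using kN by (simp add: power_add[symmetric])
        also have "\<dots> = -1" using assms by simp
        finally show ?thesis by (cases "even k") auto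
      qed
      then show ?thesis unfolding g0_def using kN by (simp add: algebra_simps)
    qed
    also have "\<dots> = GG N z" unfolding GG_def zk by simp
    finally show ?thesis .
  qed
qed


definition nx :: "nat \<Rightarrow> nat \<Rightarrow> nat \<Rightarrow> nat" where "nx N d x = nat ((int x + int d) mod int N)"
definition pv :: "nat \<Rightarrow> nat \<Rightarrow> nat \<Rightarrow> nat" where "pv N d x = nat ((int x - int d) mod int N)"

lemma nx_lt: "N > 0 \<Longrightarrow> nx N d x < N" unfolding nx_def by (simp add: nat_less_iff)
lemma pv_lt: "N > 0 \<Longrightarrow> pv N d x < N" unfolding pv_def by (simp add: nat_less_iff)

lemma int_nx: "N > 0 \<Longrightarrow> int (nx N d x) = (int x + int d) mod int N" unfolding nx_def by simp
lemma int_pv: "N > 0 \<Longrightarrow> int (pv N d x) = (int x - int d) mod int N" unfolding pv_def by simp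

lemma adj_iff:
  assumes "x < N" "y < N"
  shows "circ_adj N d x y \<longleftrightarrow> y \<noteq> x \<and> y \<noteq> nx N d x \<and> y \<noteq> pv N d x"
proof -
  have yy: "int y mod int N = int y" using assms by simp
  have 1: "[int y - int x = int d] (mod int N) \<longleftrightarrow> y = nx N d x"
  proof -
    have "[int y - int x = int d] (mod int N) \<longleftrightarrow> int N dvd (int y - (int x + int d))"
      by (simp add: cong_iff_dvd_diff algebra_simps)
    also have "\<dots> \<longleftrightarrow> int y mod int N = (int x + int d) mod int N" by (simp add: mod_eq_dvd_iff)
    also have "\<dots> \<longleftrightarrow> y = nx N d x" unfolding yy nx_def using assms by auto
    finally show ?thesis .
  qed
  have 2: "[int y - int x = - int d] (mod int N) \<longleftrightarrow> y = pv N d x"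
  proof -
    have "[int y - int x = - int d] (mod int N) \<longleftrightarrow> int N dvd (int y - (int x - int d))"
      by (simp add: cong_iff_dvd_diff algebra_simps)
    also have "\<dots> \<longleftrightarrow> int y mod int N = (int x - int d) mod int N" by (simp add: mod_eq_dvd_iff)
    also have "\<dots> \<longleftrightarrow> y = pv N d x" unfolding yy pv_def using assms by auto
    finally show ?thesis .
  qed
  show ?thesis unfolding circ_adj_def 1 2 using assms by auto
qed

lemma adj_sym: "circ_adj N d x y = circ_adj N d y x"
proof -
  have "[int y - int x = c] (mod int N) \<longleftrightarrow> [int x - int y = - c] (mod int N)" for c
    by (metis cong_minus_minus_iff minus_diff_eq)
  then show ?thesis unfolding circ_adj_def by auto
qed

lemma distinct3:
  assumes "N \<ge> 5" "[int m * int d = 1] (mod int N)" "x < N"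
  shows "nx N d x \<noteq> x" "pv N d x \<noteq> x" "nx N d x \<noteq> pv N d x"
proof -
  have md: "int N dvd int m * int d - 1" using assms(2) by (simp add: cong_iff_dvd_diff)
  have no1: "\<not> int N dvd 1" using assms(1) by simp
  have no2: "\<not> int N dvd 2" using assms(1) zdvd_imp_le[of "int N" 2] by linarith
  have xx: "int x mod int N = int x" using assms by simp
  {
    assume "nx N d x = x"
    then have "(int x + int d) mod int N = int x mod int N" unfolding xx using int_nx[of N d x] assms(1) by simp
    then have "int N dvd int d" by (simp add: mod_eq_dvd_iff)
    then have "int N dvd int m * int d" by simp
    then have "int N dvd int m * int d - (int m * int d - 1)" using md by (rule dvd_diff)
    then have "int N dvd 1" by simp
    with no1 have False by blast
  } then show "nx N d x \<noteq> x" by blast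
  {
    assume "pv N d x = x"
    then have "(int x - int d) mod int N = int x mod int N" unfolding xx using int_pv[of N d x] assms(1) by simp
    then have "int N dvd - int d" by (simp add: mod_eq_dvd_iff)
    then have "int N dvd int m * int d" by simp
    then have "int N dvd int m * int d - (int m * int d - 1)" using md by (rule dvd_diff)
    then have "int N dvd 1" by simp
    with no1 have False by blast
  } then show "pv N d x \<noteq> x" by blast
  {
    assume "nx N d x = pv N d x"
    then have "(int x + int d) mod int N = (int x - int d) mod int N" 
      using int_pv[of N d x] int_nx[of N d x] assms(1) by simp
    then have "int N dvd 2 * int d" by (simp add: mod_eq_dvd_iff)
    then have a: "int N dvd 2 * (int m * int d)" by (metis dvd_mult mult.left_commute)
    have "int N dvd 2 * (int m * int d - 1)" using md by (rule dvd_mult)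
    then have "int N dvd 2 * (int m * int d) - 2 * (int m * int d - 1)" using a by (intro dvd_diff)
    then have False using no2 by (simp add: algebra_simps)
  } then show "nx N d x \<noteq> pv N d x" by blast
qed


lemma lap_formula:
  assumes "N \<ge> 5" "[int m * int d = 1] (mod int N)" "x < N"
    and per: "\<And>z. P (z mod int N) = P z"
  shows "laplacian N (circ_adj N d) (\<lambda>y. P (int y)) x
    = (real N - 2) * P (int x) - (\<Sum>y<N. P (int y)) + P (int x + int d) + P (int x - int d)"
proof -
  note ds = distinct3[OF assms(1-3)]
  have N0: "N > 0" using assms by simp
  let ?B = "{x, nx N d x, pv N d x}"
  have set: "{y. y < N \<and> circ_adj N d x y} = {..<N} - ?B"
    using adj_iff[OF assms(3)] by auto
  have sub: "?B \<subseteq> {..<N}" using assms nx_lt[OF N0] pv_lt[OF N0] by auto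
  have pn: "P (int (nx N d x)) = P (int x + int d)" unfolding nx_def using N0 per by simp
  have pp: "P (int (pv N d x)) = P (int x - int d)" unfolding pv_def using N0 per by simp
  have "laplacian N (circ_adj N d) (\<lambda>y. P (int y)) x
     = (\<Sum>y<N. P (int x) - P (int y)) - (\<Sum>y\<in>?B. P (int x) - P (int y))"
    unfolding laplacian_def set by (rule sum_diff[OF finite_lessThan sub])
  also have "(\<Sum>y\<in>?B. P (int x) - P (int y)) = 2 * P (int x) - P (int x + int d) - P (int x - int d)"
    using ds pn pp by simp
  also have "(\<Sum>y<N. P (int x) - P (int y)) = real N * P (int x) - (\<Sum>y<N. P (int y))"
    by (simp add: sum_subtractf)
  finally show ?thesis by (simp add: algebra_simps)
qed


lemma sum_swap_adj:
  fixes adj :: "nat \<Rightarrow> nat \<Rightarrow> bool" and f :: "nat \<Rightarrow> nat \<Rightarrow> 'b::comm_monoid_add"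
  assumes sym: "\<And>x y. adj x y = adj y x"
  shows "(\<Sum>x<N. \<Sum>y\<in>{y. y < N \<and> adj x y}. f x y) = (\<Sum>x<N. \<Sum>y\<in>{y. y < N \<and> adj x y}. f y x)"
proof -
  have e: "(\<Sum>y\<in>{y. y < N \<and> adj x y}. g y) = (\<Sum>y<N. if adj x y then g y else 0)" for x and g :: "nat \<Rightarrow> 'b::comm_monoid_add"
  proof -
    have "{y. y < N \<and> adj x y} = {y \<in> {..<N}. adj x y}" by auto
    then show ?thesis using sum.inter_filter[of "{..<N}" g "adj x"] by simp
  qed
  have "(\<Sum>x<N. \<Sum>y\<in>{y. y < N \<and> adj x y}. f x y) = (\<Sum>x<N. \<Sum>y<N. if adj x y then f x y else 0)"
    by (simp add: e)
  also have "\<dots> = (\<Sum>y<N. \<Sum>x<N. if adj x y then f x y else 0)" by (rule sum.swap)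
  also have "\<dots> = (\<Sum>y<N. \<Sum>x<N. if adj y x then f x y else 0)" by (simp add: sym)
  also have "\<dots> = (\<Sum>x<N. \<Sum>y\<in>{y. y < N \<and> adj x y}. f y x)" by (simp add: e)
  finally show ?thesis .
qed

lemma lap_sum_zero:
  assumes sym: "\<And>x y. adj x y = adj y x"
  shows "(\<Sum>x<N. laplacian N adj phi x) = 0"
proof -
  have "(\<Sum>x<N. laplacian N adj phi x) = (\<Sum>x<N. \<Sum>y\<in>{y. y < N \<and> adj x y}. phi x - phi y)"
    unfolding laplacian_def ..
  also have "\<dots> = (\<Sum>x<N. \<Sum>y\<in>{y. y < N \<and> adj x y}. phi y - phi x)"
    by (rule sum_swap_adj[OF sym])
  also have "\<dots> = - (\<Sum>x<N. \<Sum>y\<in>{y. y < N \<and> adj x y}. phi x - phi y)"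
    by (simp add: sum_negf[symmetric])
  finally have "(\<Sum>x<N. laplacian N adj phi x) = - (\<Sum>x<N. laplacian N adj phi x)"
    unfolding laplacian_def .
  then show ?thesis by simp
qed

lemma harmonic_adj_eq:
  assumes sym: "\<And>x y. adj x y = adj y x"
    and h: "\<forall>x<N. laplacian N adj psi x = 0"
    and xy: "x < N" "y < N" "adj x y"
  shows "psi x = psi y"
proof -
  let ?A = "\<lambda>x. {y. y < N \<and> adj x y}"
  have "(\<Sum>x<N. psi x * laplacian N adj psi x) = 0" using h by simp
  then have E1: "(\<Sum>x<N. \<Sum>y\<in>?A x. psi x * (psi x - psi y)) = 0"
    unfolding laplacian_def by (simp add: sum_distrib_left)
  have E2: "(\<Sum>x<N. \<Sum>y\<in>?A x. psi y * (psi y - psi x)) = 0"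
    using E1 sum_swap_adj[OF sym, where N=N and f="\<lambda>x y. psi x * (psi x - psi y)"] by simp
  have "(\<Sum>x<N. \<Sum>y\<in>?A x. (psi x - psi y)^2)
      = (\<Sum>x<N. \<Sum>y\<in>?A x. psi x * (psi x - psi y) + psi y * (psi y - psi x))"
    by (intro sum.cong refl) (simp add: power2_eq_square algebra_simps)
  also have "\<dots> = 0" using E1 E2 by (simp add: sum.distrib)
  finally have S: "(\<Sum>x<N. \<Sum>y\<in>?A x. (psi x - psi y)^2) = 0" .
  have "(\<Sum>y\<in>?A x. (psi x - psi y)^2) = 0"
    using S xy by (subst (asm) sum_nonneg_eq_0_iff) (auto intro: sum_nonneg)
  then have "(psi x - psi y)^2 = 0"
    using xy by (subst (asm) sum_nonneg_eq_0_iff) auto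
  then show ?thesis by simp
qed

lemma exists_outside:
  assumes "finite F" "card F < N"
  shows "\<exists>c<N. c \<notin> F"
proof (rule ccontr)
  assume "\<not> ?thesis"
  then have "{..<N} \<subseteq> F" by auto
  then have "card {..<N} \<le> card F" using assms(1) by (rule card_mono[rotated])
  then show False using assms(2) by simp
qed

lemma card4: "card {a, b, c, e :: nat} \<le> 4"
  using card_length[of "[a, b, c, e]"] by simp

lemma connected_const:
  assumes "N \<ge> 5" "[int m * int d = 1] (mod int N)"
    and E: "\<And>x y. x < N \<Longrightarrow> y < N \<Longrightarrow> circ_adj N d x y \<Longrightarrow> psi x = psi y"
    and ab: "a < N" "b < N"
  shows "psi a = psi b"
proof (cases "a = b \<or> circ_adj N d a b")
  case True
  then show ?thesis using E ab by auto
next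
  case False
  then have nab: "a \<noteq> b" "\<not> circ_adj N d a b" by simp_all
  then have b: "b = nx N d a \<or> b = pv N d a" unfolding adj_iff[OF ab] by simp
  have "\<not> circ_adj N d b a" using nab adj_sym[of N d a b] by simp
  then have a: "a = nx N d b \<or> a = pv N d b" using nab unfolding adj_iff[OF ab(2,1)] by simp
  define w where "w = (if a = nx N d b then pv N d b else nx N d b)"
  have "card {a, nx N d a, pv N d a, w} < N" using card4[of a "nx N d a" "pv N d a" w] assms(1) by linarith
  then obtain c where c: "c < N" "c \<notin> {a, nx N d a, pv N d a, w}"
    using exists_outside[of "{a, nx N d a, pv N d a, w}" N] by auto
  have c1: "c \<noteq> a" "c \<noteq> nx N d a" "c \<noteq> pv N d a" "c \<noteq> w" using c(2) by simp_all
  have "circ_adj N d a c" using adj_iff[OF ab(1) c(1)] c1 by simp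
  then have 1: "psi a = psi c" by (rule E[OF ab(1) c(1)])
  have c2: "c \<noteq> b" using b c1 by blast
  have c3: "c \<noteq> nx N d b" "c \<noteq> pv N d b" using a c1 unfolding w_def by (auto split: if_splits)
  have "circ_adj N d b c" using adj_iff[OF ab(2) c(1)] c2 c3 by simp
  then have 2: "psi b = psi c" by (rule E[OF ab(2) c(1)])
  show ?thesis using 1 2 by simp
qed

lemma mod_zero_iff_eq:
  assumes "[int m * int d = 1] (mod int N)" "x < N" "u < N"
  shows "(int m * (int x - int u)) mod int N = 0 \<longleftrightarrow> x = u"
proof
  assume h: "(int m * (int x - int u)) mod int N = 0"
  have md: "int N dvd int m * int d - 1" using assms(1) by (simp add: cong_iff_dvd_diff)
  have "int N dvd int m * (int x - int u)" using h by (simp add: mod_eq_0_iff_dvd)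
  then have a: "int N dvd (int m * int d) * (int x - int u)"
    by (metis dvd_mult mult.assoc mult.commute)
  have b: "int N dvd (int m * int d - 1) * (int x - int u)" using md by (rule dvd_mult2)
  have "int N dvd (int m * int d) * (int x - int u) - (int m * int d - 1) * (int x - int u)"
    using a b by (rule dvd_diff)
  then have "int N dvd int x - int u" by (simp add: algebra_simps)
  then have "int x mod int N = int u mod int N" by (simp add: mod_eq_dvd_iff)
  then show "x = u" using assms by simp
qed simp

lemma GG_shift:
  assumes "[int m * int d = 1] (mod int N)"
  shows "GG N (int m * (a + int d)) = GG N (int m * a + 1)"
    "GG N (int m * (a - int d)) = GG N (int m * a - 1)"
proof -
  have md: "(int m * int d) mod int N = 1 mod int N" using assms by (simp add: cong_def)
  have "(int m * a + int m * int d) mod int N = (int m * a + 1) mod int N"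
    by (metis md mod_add_right_eq)
  then show "GG N (int m * (a + int d)) = GG N (int m * a + 1)"
    by (intro GG_cong) (simp add: algebra_simps)
  have "(int m * a - int m * int d) mod int N = (int m * a - 1) mod int N"
    by (metis md mod_diff_right_eq)
  then show "GG N (int m * (a - int d)) = GG N (int m * a - 1)"
    by (intro GG_cong) (simp add: algebra_simps)
qed

lemma eff_res_gen:
  assumes N5: "N \<ge> 5" and oN: "odd N" and md: "[int m * int d = 1] (mod int N)"
    and uv: "u < N" "v < N"
  shows "eff_res N (circ_adj N d) u v = 2 * (GG N 0 - GG N (int m * (int v - int u)))"
proof -
  define P where "P z = GG N (int m * (z - int u)) - GG N (int m * (z - int v))" for z
  define phi where "phi y = P (int y)" for y
  have per: "P (z mod int N) = P z" for z
  proof -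
    have "(int m * (z mod int N - int w)) mod int N = (int m * (z - int w)) mod int N" for w
      by (metis mod_diff_left_eq mod_mult_right_eq)
    then show ?thesis unfolding P_def by (metis GG_cong)
  qed
  define S where "S = (\<Sum>y<N. P (int y))"
  have T: "(real N - 2) * GG N (int m * (int x - int w)) + GG N (int m * (int x + int d - int w))
      + GG N (int m * (int x - int d - int w)) = (if x = w then 1 else 0)" if "x < N" "w < N" for x w
  proof -
    have e: "int x + int d - int w = (int x - int w) + int d" "int x - int d - int w = (int x - int w) - int d"
      by simp_all
    show ?thesis unfolding e GG_shift[OF md] GG_rec[OF N5 oN] mod_zero_iff_eq[OF md that] ..
  qed
  have L: "laplacian N (circ_adj N d) phi x = (if x = u then 1 else 0) - (if x = v then 1 else 0) - S"
    if "x < N" for x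
  proof -
    have "laplacian N (circ_adj N d) phi x
      = (real N - 2) * P (int x) - S + P (int x + int d) + P (int x - int d)"
      unfolding phi_def S_def by (rule lap_formula[where P=P, OF N5 md that per])
    also have "\<dots> = ((real N - 2) * GG N (int m * (int x - int u)) + GG N (int m * (int x + int d - int u))
      + GG N (int m * (int x - int d - int u)))
      - ((real N - 2) * GG N (int m * (int x - int v)) + GG N (int m * (int x + int d - int v))
      + GG N (int m * (int x - int d - int v))) - S"
      unfolding P_def by (simp add: algebra_simps)
    also have "\<dots> = (if x = u then 1 else 0) - (if x = v then 1 else 0) - S"
      unfolding T[OF that uv(1)] T[OF that uv(2)] ..
    finally show ?thesis .
  qed
  have "(\<Sum>x<N. laplacian N (circ_adj N d) phi x) = 0"
    by (rule lap_sum_zero) (rule adj_sym)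
  also have "(\<Sum>x<N. laplacian N (circ_adj N d) phi x)
     = (\<Sum>x<N. (if x = u then 1 else 0) - (if x = v then 1 else 0) - S)"
    using L by (intro sum.cong) auto
  also have "\<dots> = - real N * S" using uv by (simp add: sum_subtractf)
  finally have S0: "S = 0" using N5 by simp
  have sol: "\<forall>x<N. laplacian N (circ_adj N d) phi x = (if x = u then 1 else 0) - (if x = v then 1 else 0)"
    using L S0 by simp
  have val: "phi u - phi v = 2 * (GG N 0 - GG N (int m * (int v - int u)))"
  proof -
    have "GG N (int m * (int u - int v)) = GG N (- (int m * (int v - int u)))"
      by (simp add: algebra_simps)
    also have "\<dots> = GG N (int m * (int v - int u))" by (rule GG_neg[OF N5 oN])
    finally show ?thesis unfolding phi_def P_def by simp
  qed
  show ?thesis unfolding eff_res_def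
  proof (rule the_equality)
    show "\<exists>phi. (\<forall>x<N. laplacian N (circ_adj N d) phi x = (if x = u then 1 else 0) - (if x = v then 1 else 0))
        \<and> 2 * (GG N 0 - GG N (int m * (int v - int u))) = phi u - phi v"
      using sol val by metis
  next
    fix r assume "\<exists>phi. (\<forall>x<N. laplacian N (circ_adj N d) phi x = (if x = u then 1 else 0) - (if x = v then 1 else 0))
        \<and> r = phi u - phi v"
    then obtain phi' where s': "\<forall>x<N. laplacian N (circ_adj N d) phi' x = (if x = u then 1 else 0) - (if x = v then 1 else 0)"
      and r: "r = phi' u - phi' v" by blast
    define psi where "psi x = phi' x - phi x" for x
    have hz: "\<forall>x<N. laplacian N (circ_adj N d) psi x = 0"
    proof (intro allI impI)
      fix x assume "x < N"
      have "laplacian N (circ_adj N d) psi x = laplacian N (circ_adj N d) phi' x - laplacian N (circ_adj N d) phi x"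
        unfolding laplacian_def psi_def by (simp add: sum_subtractf[symmetric] algebra_simps)
      then show "laplacian N (circ_adj N d) psi x = 0" using s' sol \<open>x < N\<close> by simp
    qed
    have "psi u = psi v"
      by (rule connected_const[OF N5 md _ uv]) (rule harmonic_adj_eq[OF adj_sym hz])
    then show "r = 2 * (GG N 0 - GG N (int m * (int v - int u)))"
      using r val unfolding psi_def by simp
  qed
qed

theorem theorem4p3:
  fixes N u v q s :: nat
  assumes "N \<ge> 5" and "odd N"
    and "u < N" and "v < N"
    and "q < N" and "[int q = int v - int u] (mod int N)"
    and "s < N" and "[2 * s = 1] (mod N)"
  defines "\<Delta> \<equiv> sqrt (real (N * (N - 4)))"
  defines "\<rho> \<equiv> (real N - 2 + \<Delta>) / 2"
  defines "\<delta> \<equiv> min ((s * q) mod N) (N - (s * q) mod N)"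
  shows "eff_res N (circ_adj N 2) u v = eff_res N (circ_adj N 1) 0 \<delta>
    \<and> eff_res N (circ_adj N 2) u v =
        2 / (\<Delta> * (\<rho> ^ N + 1)) * (\<rho> ^ N - 1 + (-1) ^ \<delta> * (\<rho> ^ \<delta> - \<rho> ^ (N - \<delta>)))"
proof -
  note N5 = assms(1) and oN = assms(2)
  have N0: "N > 0" using N5 by simp
  have "[int (2 * s) = int 1] (mod int N)" using assms(8) by (simp only: cong_int_iff)
  then have md2: "[int s * int 2 = 1] (mod int N)" by (simp add: mult.commute)
  have md1: "[int 1 * int 1 = 1] (mod int N)" by simp
  define a where "a = (s * q) mod N"
  have aN: "a < N" using N0 unfolding a_def by simp
  have dN: "\<delta> < N" "\<delta> = a \<or> \<delta> = N - a" using aN unfolding \<delta>_def a_def[symmetric] by auto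
  have R2: "eff_res N (circ_adj N 2) u v = 2 * (GG N 0 - GG N (int s * (int v - int u)))"
    using eff_res_gen[OF N5 oN md2 assms(3,4)] .
  have R1: "eff_res N (circ_adj N 1) 0 \<delta> = 2 * (GG N 0 - GG N (int \<delta>))"
    using eff_res_gen[OF N5 oN md1 N0 dN(1)] by simp
  have g1: "GG N (int s * (int v - int u)) = GG N (int a)"
  proof (rule GG_cong)
    have "int q mod int N = (int v - int u) mod int N" using assms(6) by (simp add: cong_def)
    then have "(int s * (int v - int u)) mod int N = (int s * int q) mod int N"
      by (metis mod_mult_right_eq)
    also have "\<dots> = int a mod int N" unfolding a_def by (simp add: of_nat_mod)
    finally show "(int s * (int v - int u)) mod int N = int a mod int N" .
  qed
  have g2: "GG N (int \<delta>) = GG N (int a)"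
    using dN(2)
  proof
    assume h: "\<delta> = N - a"
    have "GG N (int \<delta>) = GG N (- int a)"
    proof (rule GG_cong)
      have "int \<delta> = - int a + 1 * int N" using h aN by (simp add: of_nat_diff)
      then show "int \<delta> mod int N = - int a mod int N" by (metis mod_mult_self1)
    qed
    also have "\<dots> = GG N (int a)" by (rule GG_neg[OF N5 oN])
    finally show ?thesis .
  qed simp
  have G0: "GG N 0 = g0 N 0" using GG_nat[OF N0] by simp
  have Gd: "GG N (int \<delta>) = g0 N \<delta>" by (rule GG_nat[OF dN(1)])
  have DD: "Dl N = \<Delta>" "rh N = \<rho>" unfolding Dl_def rh_def \<Delta>_def \<rho>_def by simp_all
  have R: "eff_res N (circ_adj N 1) 0 \<delta> =
        2 / (\<Delta> * (\<rho> ^ N + 1)) * (\<rho> ^ N - 1 + (-1) ^ \<delta> * (\<rho> ^ \<delta> - \<rho> ^ (N - \<delta>)))"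
    unfolding R1 Gd G0 g0_def cc_def DD by (simp add: divide_inverse algebra_simps)
  have E: "eff_res N (circ_adj N 2) u v = eff_res N (circ_adj N 1) 0 \<delta>"
    unfolding R1 R2 g1 g2 ..
  show ?thesis using E R by simp
qed

end
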